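(* Let $\ell,d\ge0$ be integers and $a=(a_1,\dots,a_\ell)\in\{1,\dots,n\}^\ell$. In $W_\eta(2n)$ the following two elements are equal: (i) the sum of all degree-$d$ mixed $x\partial$-monomials indexed by $a$, i.e. $\sum_{T}z_T^{a_1}z_T^{a_2}\cdots z_T^{a_\ell}$, where $T$ runs over subsets of $\{1,\dots,\ell\}$ with $\ell-2|T|=d$, and $z_T^{a_i}=\partial^{a_i}$ if $i\in T$, $z_T^{a_i}=x^{a_i}$ if $i\notin T$; (ii) the sum of all distinct degree-$d$ ordered $\eta x\partial$-monomials indexed by permutations of $a$, i.e. $$\sum_{(M,X)}\ \prod_{\{i,j\}\in M}\eta^{a_ia_j}\prod_{k\in X}x^{a_k}\prod_{k\in U_M\setminus X}\partial^{a_k},$$ where $M$ runs over all sets of pairwise disjoint 2-element subsets of $\{1,\dots,\ell\}$, $U_M$ is the set of positions not covered by $M$, and $X$ runs over subsets of $U_M$ with $|X|-|U_M\setminus X|=d$ (within each product the $x$-factors are written before the $\partial$-factors).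
   Context: $W_\eta(2n)$ is the unital associative $\mathbb{C}$-algebra generated by $x^a,\partial_a$ ($a=1,\dots,n$) and central elements $\eta_{ab},\eta^{ab}$ subject to $x^ax^b=x^bx^a$, $\partial_a\partial_b=\partial_b\partial_a$, $\partial_ax^b-x^b\partial_a=\delta_a^b$, $\eta_{ab}=\eta_{ba}$, $\sum_b\eta_{ab}\eta^{bc}=\delta_a^c$. Put $\partial^a=\sum_b\eta^{ab}\partial_b$; then $\partial^a\partial^b=\partial^b\partial^a$ and $\partial^ax^b-x^b\partial^a=\eta^{ab}$. Grading: $\deg x^a=1$, $\deg\partial_a=\deg\partial^a=-1$, $\deg\eta=0$. In the paper's terminology an ordered $\eta x\partial$-monomial indexed by $b=(b_1,\dots,b_\ell)$ is $(\eta^{b_1b_2}\cdots\eta^{b_{2r-1}b_{2r}})(x^{b_{2r+1}}\cdots x^{b_{2r+s}})(\partial^{b_{2r+s+1}}\cdots\partial^{b_{2r+s+t}})$, of degree $s-t$; "distinct" means terms are counted once up to the symmetry $\eta^{ij}=\eta^{ji}$ and reordering of commuting factors, but positions in $a$ are regarded as distinct even if their values coincide; sum (ii) is the explicit sum written in the claim. *)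

theory Defs
  imports Main
begin

text \<open>Presentation of W_eta(2n): generators x^a, d_a (lower derivative), central eta_ab, eta^ab,
 indices a in {1..n}. A statement holding for every unital ring with elements satisfying
 the defining relations is (by the universal property) the statement in W_eta(2n).\<close>

definition weyl_rels ::
  "nat \<Rightarrow> (nat \<Rightarrow> 'a::ring_1) \<Rightarrow> (nat \<Rightarrow> 'a) \<Rightarrow> (nat \<Rightarrow> nat \<Rightarrow> 'a) \<Rightarrow> (nat \<Rightarrow> nat \<Rightarrow> 'a) \<Rightarrow> bool"
  where "weyl_rels n x dl etalo etaup \<longleftrightarrow>
    (\<forall>a\<in>{1..n}. \<forall>b\<in>{1..n}.
        x a * x b = x b * x a \<and>
        dl a * dl b = dl b * dl a \<and>
        dl a * x b - x b * dl a = (if a = b then 1 else 0) \<and>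
        etalo a b = etalo b a) \<and>
    (\<forall>a\<in>{1..n}. \<forall>c\<in>{1..n}. (\<Sum>b=1..n. etalo a b * etaup b c) = (if a = c then 1 else 0)) \<and>
    \<comment> \<open>centrality of the eta's: they commute with all generators\<close>
    (\<forall>a\<in>{1..n}. \<forall>b\<in>{1..n}. \<forall>c\<in>{1..n}.
        (\<forall>g\<in>{etalo a b, etaup a b}.
           g * x c = x c * g \<and> g * dl c = dl c * g \<and>
           (\<forall>e\<in>{1..n}. g * etalo c e = etalo c e * g \<and> g * etaup c e = etaup c e * g)))"

definition dup :: "nat \<Rightarrow> (nat \<Rightarrow> 'a::ring_1) \<Rightarrow> (nat \<Rightarrow> nat \<Rightarrow> 'a) \<Rightarrow> nat \<Rightarrow> 'a"
  where "dup n dl etaup a = (\<Sum>b=1..n. etaup a b * dl b)"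

text \<open>Product over a finite set of commuting factors, in some (arbitrary) order.\<close>
definition cprod :: "('b \<Rightarrow> 'a::monoid_mult) \<Rightarrow> 'b set \<Rightarrow> 'a"
  where "cprod f S = prod_list (map f (SOME xs. distinct xs \<and> set xs = S))"

definition oprod :: "(nat \<Rightarrow> 'a::monoid_mult) \<Rightarrow> nat set \<Rightarrow> 'a"
  where "oprod f S = prod_list (map f (sorted_list_of_set S))"

definition pmatching :: "nat \<Rightarrow> nat set set \<Rightarrow> bool"
  where "pmatching l M \<longleftrightarrow>
     (\<forall>p\<in>M. p \<subseteq> {0..<l} \<and> card p = 2) \<and> (\<forall>p\<in>M. \<forall>q\<in>M. p \<noteq> q \<longrightarrow> p \<inter> q = {})"

definition sum_i ::
  "nat \<Rightarrow> (nat \<Rightarrow> 'a::ring_1) \<Rightarrow> (nat \<Rightarrow> 'a) \<Rightarrow> (nat \<Rightarrow> nat \<Rightarrow> 'a) \<Rightarrow> nat list \<Rightarrow> nat \<Rightarrow> 'a"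
  where "sum_i n x dl etaup a d =
    (\<Sum>T\<in>{T. T \<subseteq> {0..<length a} \<and> int (length a) - 2 * int (card T) = int d}.
       prod_list (map (\<lambda>i. if i \<in> T then dup n dl etaup (a!i) else x (a!i)) [0..<length a]))"

definition sum_ii ::
  "nat \<Rightarrow> (nat \<Rightarrow> 'a::ring_1) \<Rightarrow> (nat \<Rightarrow> 'a) \<Rightarrow> (nat \<Rightarrow> nat \<Rightarrow> 'a) \<Rightarrow> nat list \<Rightarrow> nat \<Rightarrow> 'a"
  where "sum_ii n x dl etaup a d =
    (\<Sum>(M,X)\<in>{(M,X). pmatching (length a) M \<and> X \<subseteq> {0..<length a} - \<Union>M \<and>
                int (card X) - int (card (({0..<length a} - \<Union>M) - X)) = int d}.
       cprod (\<lambda>p. etaup (a!Min p) (a!Max p)) M *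
       oprod (\<lambda>k. x (a!k)) X *
       oprod (\<lambda>k. dup n dl etaup (a!k)) (({0..<length a} - \<Union>M) - X))"

end

theory Submission
  imports Defs
begin



lemma prod_list_commute:
  fixes z :: "'a::monoid_mult"
  assumes "\<forall>u\<in>set xs. z * f u = f u * z"
  shows "z * prod_list (map f xs) = prod_list (map f xs) * z"
  using assms
proof (induction xs)
  case Nil then show ?case by simp
next
  case (Cons u xs)
  have "z * prod_list (map f (u#xs)) = (z * f u) * prod_list (map f xs)" by (simp add: mult.assoc)
  also have "\<dots> = f u * (z * prod_list (map f xs))" using Cons by (simp add: mult.assoc)
  also have "\<dots> = f u * (prod_list (map f xs) * z)" using Cons by simp
  finally show ?case by (simp add: mult.assoc)
qed

lemma prod_list_perm:
  fixes f :: "'b \<Rightarrow> 'a::monoid_mult"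
  assumes "distinct xs" "distinct ys" "set xs = set ys"
    "\<forall>u\<in>set xs. \<forall>v\<in>set xs. f u * f v = f v * f u"
  shows "prod_list (map f xs) = prod_list (map f ys)"
  using assms
proof (induction xs arbitrary: ys)
  case Nil then show ?case by simp
next
  case (Cons u xs)
  then have "u \<in> set ys" by auto
  then obtain ys1 ys2 where ys: "ys = ys1 @ u # ys2" by (meson split_list)
  have d: "distinct (ys1 @ ys2)" using Cons.prems ys by auto
  have s: "set xs = set (ys1 @ ys2)" using Cons.prems ys by auto
  have dx: "distinct xs" using Cons.prems by simp
  have cx: "\<forall>u\<in>set xs. \<forall>v\<in>set xs. f u * f v = f v * f u" using Cons.prems(4) by simp
  have IH: "prod_list (map f xs) = prod_list (map f (ys1 @ ys2))"
    using Cons.IH[OF dx d s cx] .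
  have "\<forall>v\<in>set ys1. f u * f v = f v * f u"
  proof
    fix v assume "v \<in> set ys1"
    then have "v \<in> set (u#xs)" using Cons.prems(3) ys by simp
    moreover have "u \<in> set (u#xs)" by simp
    ultimately show "f u * f v = f v * f u" using Cons.prems(4) by blast
  qed
  then have c: "f u * prod_list (map f ys1) = prod_list (map f ys1) * f u"
    by (rule prod_list_commute)
  have "prod_list (map f ys) = prod_list (map f ys1) * f u * prod_list (map f ys2)"
    by (simp add: ys mult.assoc)
  also have "\<dots> = f u * prod_list (map f (ys1 @ ys2))" by (simp add: c[symmetric] mult.assoc)
  finally show ?case using IH by simp
qed

lemma cprod_insert:
  fixes f :: "'b \<Rightarrow> 'a::monoid_mult"
  assumes "finite S" "p \<notin> S"
    "\<forall>u\<in>insert p S. \<forall>v\<in>insert p S. f u * f v = f v * f u"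
  shows "cprod f (insert p S) = f p * cprod f S"
proof -
  define xs where "xs = (SOME xs. distinct xs \<and> set xs = insert p S)"
  define ys where "ys = (SOME xs. distinct xs \<and> set xs = S)"
  have xs: "distinct xs \<and> set xs = insert p S" unfolding xs_def
    by (rule someI_ex) (metis assms(1) finite_distinct_list finite_insert)
  have ys: "distinct ys \<and> set ys = S" unfolding ys_def
    by (rule someI_ex) (metis assms(1) finite_distinct_list)
  have "prod_list (map f xs) = prod_list (map f (p # ys))"
  proof (rule prod_list_perm)
    show "distinct xs" using xs by simp
    show "distinct (p # ys)" using ys assms(2) by simp
    show "set xs = set (p # ys)" using xs ys by simp
    have "set xs = insert p S" using xs by simp
    then show "\<forall>u\<in>set xs. \<forall>v\<in>set xs. f u * f v = f v * f u" using assms(3) by (simp only:)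
  qed
  then show ?thesis unfolding cprod_def xs_def[symmetric] ys_def[symmetric] by simp
qed

lemma cprod_cong: "(\<And>u. u \<in> S \<Longrightarrow> f u = g u) \<Longrightarrow> finite S \<Longrightarrow> cprod f S = cprod g S"
proof -
  assume a: "\<And>u. u \<in> S \<Longrightarrow> f u = g u" and fin: "finite S"
  define ys where "ys = (SOME xs. distinct xs \<and> set xs = S)"
  have ys: "distinct ys \<and> set ys = S" unfolding ys_def
    by (rule someI_ex) (metis fin finite_distinct_list)
  show ?thesis unfolding cprod_def ys_def[symmetric] using ys a
    by (metis map_eq_conv)
qed

lemma cprod_commute:
  fixes z :: "'a::monoid_mult"
  assumes "finite S" "\<forall>u\<in>S. z * f u = f u * z"
  shows "z * cprod f S = cprod f S * z"
proof -
  define ys where "ys = (SOME xs. distinct xs \<and> set xs = S)"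
  have ys: "distinct ys \<and> set ys = S" unfolding ys_def
    by (rule someI_ex) (metis assms(1) finite_distinct_list)
  show ?thesis unfolding cprod_def ys_def[symmetric]
    by (rule prod_list_commute) (use ys assms(2) in simp)
qed

lemma oprod_commute:
  fixes z :: "'a::monoid_mult"
  assumes "finite S" "\<forall>u\<in>S. z * f u = f u * z"
  shows "z * oprod f S = oprod f S * z"
  unfolding oprod_def by (rule prod_list_commute) (use assms(1,2) in simp)

lemma oprod_cong: "(\<And>u. u \<in> S \<Longrightarrow> f u = g u) \<Longrightarrow> finite S \<Longrightarrow> oprod f S = oprod g S"
  unfolding oprod_def by (metis map_eq_conv set_sorted_list_of_set)

lemma sorted_insert_max:
  fixes X :: "nat set"
  assumes "finite X" "\<forall>u\<in>X. u < l"
  shows "sorted_list_of_set (insert l X) = sorted_list_of_set X @ [l]"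
proof -
  have "sorted_wrt (<) (sorted_list_of_set X @ [l]) \<and> set (sorted_list_of_set X @ [l]) = insert l X
     \<and> length (sorted_list_of_set X @ [l]) = card (insert l X)"
    using assms by (auto simp: sorted_wrt_append strict_sorted_list_of_set)
  then show ?thesis using sorted_list_of_set_unique[of "insert l X" "sorted_list_of_set X @ [l]"] assms
    by simp
qed

lemma oprod_insert_max:
  fixes X :: "nat set"
  assumes "finite X" "\<forall>u\<in>X. u < l"
  shows "oprod f (insert l X) = oprod f X * f l"
  unfolding oprod_def using sorted_insert_max[OF assms] by simp

lemma normal_order:
  fixes g e :: "'b \<Rightarrow> 'a::ring_1"
  assumes "distinct ks" "\<forall>u\<in>set ks. g u * y = y * g u + e u"
    "\<forall>k\<in>set ks. \<forall>u\<in>set ks. e k * g u = g u * e k"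
  shows "prod_list (map g ks) * y = y * prod_list (map g ks)
     + (\<Sum>k\<in>set ks. e k * prod_list (map g (remove1 k ks)))"
  using assms
proof (induction ks)
  case Nil then show ?case by simp
next
  case (Cons u ks)
  let ?P = "prod_list (map g ks)"
  have h1: "distinct ks" using Cons.prems(1) by simp
  have h2: "\<forall>u\<in>set ks. g u * y = y * g u + e u" using Cons.prems(2) by (meson list.set_intros(2))
  have h3: "\<forall>k\<in>set ks. \<forall>u\<in>set ks. e k * g u = g u * e k" using Cons.prems(3) by (meson list.set_intros(2))
  have un: "u \<notin> set ks" using Cons.prems(1) by simp
  have IH: "?P * y = y * ?P + (\<Sum>k\<in>set ks. e k * prod_list (map g (remove1 k ks)))"
    using Cons.IH[OF h1 h2 h3] .
  have 1: "g u * y = y * g u + e u" using Cons.prems(2) by (meson list.set_intros(1))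
  have 2: "\<And>k. k \<in> set ks \<Longrightarrow> g u * e k * prod_list (map g (remove1 k ks)) = e k * (g u * prod_list (map g (remove1 k ks)))"
  proof -
    fix k assume "k \<in> set ks"
    then have "e k * g u = g u * e k" using Cons.prems(3) by (meson list.set_intros)
    then show "g u * e k * prod_list (map g (remove1 k ks)) = e k * (g u * prod_list (map g (remove1 k ks)))"
      by (simp add: mult.assoc[symmetric])
  qed
  have 3: "\<And>k. k \<in> set ks \<Longrightarrow> e k * (g u * prod_list (map g (remove1 k ks)))
     = e k * prod_list (map g (remove1 k (u#ks)))"
  proof -
    fix k assume "k \<in> set ks"
    then have "k \<noteq> u" using un by auto
    then show "e k * (g u * prod_list (map g (remove1 k ks))) = e k * prod_list (map g (remove1 k (u#ks)))"
      by simp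
  qed
  have "prod_list (map g (u#ks)) * y = g u * (?P * y)" by (simp add: mult.assoc)
  also have "\<dots> = (g u * y) * ?P + (\<Sum>k\<in>set ks. g u * e k * prod_list (map g (remove1 k ks)))"
    by (simp only: IH distrib_left sum_distrib_left mult.assoc)
  also have "\<dots> = (y * g u + e u) * ?P + (\<Sum>k\<in>set ks. e k * prod_list (map g (remove1 k (u#ks))))"
  proof -
    have "(\<Sum>k\<in>set ks. g u * e k * prod_list (map g (remove1 k ks)))
        = (\<Sum>k\<in>set ks. e k * (g u * prod_list (map g (remove1 k ks))))" by (rule sum.cong[OF refl 2])
    also have "\<dots> = (\<Sum>k\<in>set ks. e k * prod_list (map g (remove1 k (u#ks))))" by (rule sum.cong[OF refl 3])
    finally show ?thesis unfolding 1 by simp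
  qed
  also have "\<dots> = y * prod_list (map g (u#ks)) + (e u * prod_list (map g (remove1 u (u#ks)))
     + (\<Sum>k\<in>set ks. e k * prod_list (map g (remove1 k (u#ks)))))"
    by (simp add: distrib_right mult.assoc add.assoc)
  also have "\<dots> = y * prod_list (map g (u#ks)) + (\<Sum>k\<in>set (u#ks). e k * prod_list (map g (remove1 k (u#ks))))"
    using un by (simp add: sum.insert)
  finally show ?case .
qed




locale W =
  fixes n :: nat and x dl :: "nat \<Rightarrow> 'a::ring_1" and etalo etaup :: "nat \<Rightarrow> nat \<Rightarrow> 'a"
  assumes wr: "weyl_rels n x dl etalo etaup"
begin

abbreviation "D \<equiv> dup n dl etaup"

lemma ex: "i \<in> {1..n} \<Longrightarrow> j \<in> {1..n} \<Longrightarrow> k \<in> {1..n} \<Longrightarrow> etaup i j * x k = x k * etaup i j"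
  using wr unfolding weyl_rels_def by blast

lemma edl: "i \<in> {1..n} \<Longrightarrow> j \<in> {1..n} \<Longrightarrow> k \<in> {1..n} \<Longrightarrow> etaup i j * dl k = dl k * etaup i j"
  using wr unfolding weyl_rels_def by blast

lemma ee: "i \<in> {1..n} \<Longrightarrow> j \<in> {1..n} \<Longrightarrow> k \<in> {1..n} \<Longrightarrow> m \<in> {1..n} \<Longrightarrow>
   etaup i j * etaup k m = etaup k m * etaup i j"
  using wr unfolding weyl_rels_def by blast

lemma dlx: "i \<in> {1..n} \<Longrightarrow> k \<in> {1..n} \<Longrightarrow> dl i * x k = x k * dl i + (if i = k then 1 else 0)"
proof -
  assume "i \<in> {1..n}" "k \<in> {1..n}"
  then have "dl i * x k - x k * dl i = (if i = k then 1 else 0)" using wr unfolding weyl_rels_def by blast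
  then show ?thesis by (simp add: algebra_simps)
qed

lemma eD: "i \<in> {1..n} \<Longrightarrow> j \<in> {1..n} \<Longrightarrow> k \<in> {1..n} \<Longrightarrow> etaup i j * D k = D k * etaup i j"
proof -
  assume a: "i \<in> {1..n}" "j \<in> {1..n}" "k \<in> {1..n}"
  have "etaup i j * D k = (\<Sum>b=1..n. etaup i j * (etaup k b * dl b))"
    unfolding dup_def by (simp add: sum_distrib_left)
  also have "\<dots> = (\<Sum>b=1..n. (etaup k b * dl b) * etaup i j)"
  proof (rule sum.cong[OF refl])
    fix b assume b: "b \<in> {1..n}"
    have "etaup i j * (etaup k b * dl b) = (etaup i j * etaup k b) * dl b" by (simp add: mult.assoc)
    also have "\<dots> = etaup k b * (etaup i j * dl b)" using ee[OF a(1,2) a(3) b] by (simp add: mult.assoc)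
    also have "\<dots> = (etaup k b * dl b) * etaup i j" using edl[OF a(1,2) b] by (simp add: mult.assoc)
    finally show "etaup i j * (etaup k b * dl b) = (etaup k b * dl b) * etaup i j" .
  qed
  also have "\<dots> = D k * etaup i j" unfolding dup_def by (simp add: sum_distrib_right)
  finally show ?thesis .
qed

lemma Dx: "i \<in> {1..n} \<Longrightarrow> k \<in> {1..n} \<Longrightarrow> D i * x k = x k * D i + etaup i k"
proof -
  assume a: "i \<in> {1..n}" "k \<in> {1..n}"
  have "D i * x k = (\<Sum>b=1..n. etaup i b * (dl b * x k))"
    unfolding dup_def by (simp add: sum_distrib_right mult.assoc)
  also have "\<dots> = (\<Sum>b=1..n. x k * (etaup i b * dl b) + etaup i b * (if b = k then 1 else 0))"
  proof (rule sum.cong[OF refl])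
    fix b assume b: "b \<in> {1..n}"
    have "etaup i b * (dl b * x k) = etaup i b * (x k * dl b) + etaup i b * (if b = k then 1 else 0)"
      using dlx[OF b a(2)] by (simp add: distrib_left)
    also have "etaup i b * (x k * dl b) = x k * (etaup i b * dl b)"
      using ex[OF a(1) b a(2)] by (simp add: mult.assoc[symmetric])
    finally show "etaup i b * (dl b * x k) = x k * (etaup i b * dl b) + etaup i b * (if b = k then 1 else 0)" .
  qed
  also have "\<dots> = x k * D i + etaup i k"
  proof -
    have "(\<Sum>b=1..n. etaup i b * (if b = k then 1 else 0)) = (\<Sum>b=1..n. if b = k then etaup i b else 0)"
      by (rule sum.cong) auto
    also have "\<dots> = etaup i k" using a(2) by (simp add: sum.delta)
    finally show ?thesis by (simp only: sum.distrib dup_def sum_distrib_left)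
  qed
  finally show ?thesis .
qed

end



context W begin

definition wi :: "nat list \<Rightarrow> nat set \<Rightarrow> 'a" where
  "wi a T = prod_list (map (\<lambda>i. if i \<in> T then D (a!i) else x (a!i)) [0..<length a])"

definition Si :: "nat list \<Rightarrow> int \<Rightarrow> 'a" where
  "Si a e = (\<Sum>T\<in>{T. T \<subseteq> {0..<length a} \<and> int (length a) - 2 * int (card T) = e}. wi a T)"

lemma sum_i_Si: "sum_i n x dl etaup a d = Si a (int d)"
  unfolding sum_i_def Si_def wi_def by simp

lemma wi_snoc: "wi (a @ [c]) T = wi a T * (if length a \<in> T then D c else x c)"
proof -
  have eq: "map (\<lambda>i. if i \<in> T then D ((a@[c])!i) else x ((a@[c])!i)) [0..<length a]
      = map (\<lambda>i. if i \<in> T then D (a!i) else x (a!i)) [0..<length a]"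
    by (rule map_cong) (auto simp: nth_append)
  have "wi (a@[c]) T = prod_list (map (\<lambda>i. if i \<in> T then D ((a@[c])!i) else x ((a@[c])!i)) [0..<length a])
     * (if length a \<in> T then D c else x c)" unfolding wi_def by simp
  also have "\<dots> = wi a T * (if length a \<in> T then D c else x c)" unfolding eq wi_def ..
  finally show ?thesis .
qed

lemma wi_cong: "(\<And>i. i < length a \<Longrightarrow> (i \<in> T \<longleftrightarrow> i \<in> T')) \<Longrightarrow> wi a T = wi a T'"
  unfolding wi_def by (rule arg_cong[where f=prod_list], rule map_cong) auto

lemma Si_Nil: "Si [] e = (if e = 0 then 1 else 0)"
proof -
  have "{T. T \<subseteq> {0..<length ([]::nat list)} \<and> int (length ([]::nat list)) - 2 * int (card T) = e}
      = (if e = 0 then {{}} else {})" by auto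
  then show ?thesis unfolding Si_def wi_def by simp
qed

lemma Si_snoc: "Si (a @ [c]) e = Si a (e - 1) * x c + Si a (e + 1) * D c"
proof -
  let ?l = "length a"
  let ?S = "{T. T \<subseteq> {0..<length (a@[c])} \<and> int (length (a@[c])) - 2 * int (card T) = e}"
  let ?S1 = "{T. T \<subseteq> {0..<?l} \<and> int ?l - 2 * int (card T) = e - 1}"
  let ?S2 = "{T. T \<subseteq> {0..<?l} \<and> int ?l - 2 * int (card T) = e + 1}"
  have fin: "finite ?S" by (rule finite_subset[of _ "Pow {0..<length (a@[c])}"]) auto
  have split: "?S = {T\<in>?S. ?l \<notin> T} \<union> {T\<in>?S. ?l \<in> T}" by blast
  have "Si (a@[c]) e = (\<Sum>T\<in>{T\<in>?S. ?l \<notin> T}. wi (a@[c]) T) + (\<Sum>T\<in>{T\<in>?S. ?l \<in> T}. wi (a@[c]) T)"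
    unfolding Si_def
    apply (subst split)
    apply (rule sum.union_disjoint)
    apply (rule finite_subset[OF _ fin], blast)
    apply (rule finite_subset[OF _ fin], blast)
    apply blast
    done
  also have "(\<Sum>T\<in>{T\<in>?S. ?l \<notin> T}. wi (a@[c]) T) = (\<Sum>T\<in>?S1. wi a T * x c)"
  proof (rule sum.cong)
    show "{T\<in>?S. ?l \<notin> T} = ?S1"
    proof
      show "{T\<in>?S. ?l \<notin> T} \<subseteq> ?S1"
      proof
        fix T assume "T \<in> {T\<in>?S. ?l \<notin> T}"
        then have "T \<subseteq> {0..<Suc ?l}" "?l \<notin> T" "int (Suc ?l) - 2 * int (card T) = e" by auto
        then show "T \<in> ?S1" by (auto simp: less_Suc_eq)
      qed
      show "?S1 \<subseteq> {T\<in>?S. ?l \<notin> T}" by auto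
    qed
  qed (auto simp: wi_snoc)
  also have "(\<Sum>T\<in>{T\<in>?S. ?l \<in> T}. wi (a@[c]) T) = (\<Sum>T\<in>?S2. wi a T * D c)"
  proof (rule sum.reindex_bij_witness[where j = "\<lambda>T. T - {?l}" and i = "insert ?l"])
    fix T assume "T \<in> {T\<in>?S. ?l \<in> T}"
    then have T: "T \<subseteq> {0..<Suc ?l}" "?l \<in> T" "int (Suc ?l) - 2 * int (card T) = e" by simp_all
    show "insert ?l (T - {?l}) = T" using T(2) by blast
    have fT: "finite T" using T(1) finite_subset by blast
    have c1: "card (T - {?l}) = card T - 1" using T(2) fT by simp
    have "card T \<ge> 1" using T(2) fT by (metis One_nat_def Suc_leI card_gt_0_iff empty_iff)
    with c1 have "int (card (T - {?l})) = int (card T) - 1" by simp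
    then have "int ?l - 2 * int (card (T - {?l})) = e + 1" using T(3) by simp
    moreover have "T - {?l} \<subseteq> {0..<?l}" using T(1) by (auto simp: less_Suc_eq)
    ultimately show "T - {?l} \<in> ?S2" by simp
    have "wi a (T - {?l}) = wi a T" by (rule wi_cong) auto
    then show "wi a (T - {?l}) * D c = wi (a@[c]) T" using T(2) by (simp add: wi_snoc)
  next
    fix T assume "T \<in> ?S2"
    then have T: "T \<subseteq> {0..<?l}" "int ?l - 2 * int (card T) = e + 1" by simp_all
    have fT: "finite T" using T(1) finite_subset by blast
    have nl: "?l \<notin> T" using T(1) by auto
    show "insert ?l T - {?l} = T" using nl by simp
    have "card (insert ?l T) = Suc (card T)" using nl fT by simp
    then have "int (Suc ?l) - 2 * int (card (insert ?l T)) = e" using T(2) by simp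
    moreover have "insert ?l T \<subseteq> {0..<length (a@[c])}" using T(1) by auto
    ultimately show "insert ?l T \<in> {T\<in>?S. ?l \<in> T}" by simp
  qed
  finally show ?thesis unfolding Si_def by (simp add: sum_distrib_right)
qed

end



definition U :: "nat \<Rightarrow> nat set set \<Rightarrow> nat set" where "U l M = {0..<l} - \<Union>M"

definition Bs :: "nat \<Rightarrow> int \<Rightarrow> (nat set set \<times> nat set) set" where
  "Bs l e = {(M,X). pmatching l M \<and> X \<subseteq> U l M \<and> int (card X) - int (card (U l M - X)) = e}"

lemma pm_sub: "pmatching l M \<Longrightarrow> p \<in> M \<Longrightarrow> p \<subseteq> {0..<l}"
  unfolding pmatching_def by blast

lemma pm_card: "pmatching l M \<Longrightarrow> p \<in> M \<Longrightarrow> card p = 2"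
  unfolding pmatching_def by blast

lemma pm_disj: "pmatching l M \<Longrightarrow> p \<in> M \<Longrightarrow> q \<in> M \<Longrightarrow> p \<noteq> q \<Longrightarrow> p \<inter> q = {}"
  unfolding pmatching_def by blast

lemma pm_Pow: "pmatching l M \<Longrightarrow> M \<subseteq> Pow {0..<l}"
  using pm_sub by blast

lemma pm_fin: "pmatching l M \<Longrightarrow> finite M"
  using pm_Pow finite_subset by (metis finite_Pow_iff finite_atLeastLessThan)

lemma Bs_fin: "finite (Bs l e)"
proof (rule finite_subset[of _ "Pow (Pow {0..<l}) \<times> Pow {0..<l}"])
  show "Bs l e \<subseteq> Pow (Pow {0..<l}) \<times> Pow {0..<l}"
    unfolding Bs_def U_def using pm_Pow by blast
qed simp

lemma U_fin: "finite (U l M)" unfolding U_def by simp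

lemma pm_Suc: "pmatching l M \<Longrightarrow> pmatching (Suc l) M"
  unfolding pmatching_def by fastforce

lemma pm_down: "pmatching (Suc l) M \<Longrightarrow> l \<notin> \<Union>M \<Longrightarrow> pmatching l M"
  unfolding pmatching_def by (auto simp: less_Suc_eq) (metis UnionI less_SucE subsetD atLeastLessThan_iff)

lemma U_Suc: "l \<notin> \<Union>M \<Longrightarrow> U (Suc l) M = insert l (U l M)"
  unfolding U_def by auto

lemma l_notin_U: "l \<notin> U l M" unfolding U_def by simp

lemma pm_notl: "pmatching l M \<Longrightarrow> l \<notin> \<Union>M"
  using pm_sub by fastforce

lemma card2_MinMax: "finite p \<Longrightarrow> card p = 2 \<Longrightarrow> Min p \<in> p \<and> Max p \<in> p"
  by (metis Max_in Min_in card.empty zero_neq_numeral)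

lemma pm_MinMax: "pmatching l M \<Longrightarrow> p \<in> M \<Longrightarrow> Min p < l \<and> Max p < l"
proof -
  assume a: "pmatching l M" "p \<in> M"
  have "p \<subseteq> {0..<l}" "card p = 2" using pm_sub[OF a] pm_card[OF a] by auto
  moreover then have "finite p" using finite_subset by blast
  ultimately show ?thesis using card2_MinMax by fastforce
qed

lemma cprod_empty: "cprod f {} = 1"
proof -
  have "set (SOME xs. distinct xs \<and> set xs = ({}::'b set)) = {}"
    by (rule conjunct2[OF someI_ex[of "\<lambda>xs. distinct xs \<and> set xs = ({}::'b set)"]]) simp
  then show ?thesis unfolding cprod_def by simp
qed


context W begin

definition trm :: "nat list \<Rightarrow> nat set set \<Rightarrow> nat set \<Rightarrow> 'a" where
  "trm a M X = cprod (\<lambda>p. etaup (a!Min p) (a!Max p)) M * oprod (\<lambda>k. x (a!k)) X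
     * oprod (\<lambda>k. D (a!k)) (U (length a) M - X)"

definition Sii :: "nat list \<Rightarrow> int \<Rightarrow> 'a" where
  "Sii a e = (\<Sum>(M,X)\<in>Bs (length a) e. trm a M X)"

lemma sum_ii_Sii: "sum_ii n x dl etaup a d = Sii a (int d)"
  unfolding sum_ii_def Sii_def Bs_def trm_def U_def by simp

lemma Sii_Nil: "Sii [] e = (if e = 0 then 1 else 0)"
proof -
  have pm0: "pmatching 0 M \<longleftrightarrow> M = {}" for M
    unfolding pmatching_def by auto
  have "Bs 0 e = (if e = 0 then {({},{})} else {})"
    unfolding Bs_def U_def by (auto simp: pm0)
  then show ?thesis unfolding Sii_def trm_def by (simp add: cprod_empty oprod_def U_def)
qed

lemma nth_in: "set a \<subseteq> {1..n} \<Longrightarrow> k < length a \<Longrightarrow> a!k \<in> {1..n}"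
  using nth_mem by blast

lemma OD_x:
  assumes "finite S" "\<forall>k\<in>S. k < length a" "set a \<subseteq> {1..n}" "c \<in> {1..n}"
  shows "oprod (\<lambda>k. D (a!k)) S * x c = x c * oprod (\<lambda>k. D (a!k)) S
     + (\<Sum>k\<in>S. etaup (a!k) c * oprod (\<lambda>k. D (a!k)) (S - {k}))"
proof -
  let ?ks = "sorted_list_of_set S"
  have st: "set ?ks = S" using assms(1) by simp
  have v: "\<And>k. k \<in> S \<Longrightarrow> a!k \<in> {1..n}" using assms(2,3) nth_in by blast
  have "prod_list (map (\<lambda>k. D (a!k)) ?ks) * x c = x c * prod_list (map (\<lambda>k. D (a!k)) ?ks)
     + (\<Sum>k\<in>set ?ks. etaup (a!k) c * prod_list (map (\<lambda>k. D (a!k)) (remove1 k ?ks)))"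
  proof (rule normal_order)
    show "distinct ?ks" by simp
    show "\<forall>u\<in>set ?ks. D (a!u) * x c = x c * D (a!u) + etaup (a!u) c"
      unfolding st using Dx[OF v assms(4)] by blast
    show "\<forall>k\<in>set ?ks. \<forall>u\<in>set ?ks. etaup (a!k) c * D (a!u) = D (a!u) * etaup (a!k) c"
      unfolding st using eD[OF v assms(4) v] by blast
  qed
  moreover have "\<And>k. remove1 k ?ks = sorted_list_of_set (S - {k})"
    using sorted_list_of_set_remove[OF assms(1)] by simp
  ultimately show ?thesis unfolding oprod_def st by simp
qed

lemma trm_x:
  assumes "set a \<subseteq> {1..n}" "c \<in> {1..n}"
  shows "trm a M X * x c = cprod (\<lambda>p. etaup (a!Min p) (a!Max p)) M * oprod (\<lambda>k. x (a!k)) X * x c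
       * oprod (\<lambda>k. D (a!k)) (U (length a) M - X)
     + (\<Sum>k\<in>U (length a) M - X. cprod (\<lambda>p. etaup (a!Min p) (a!Max p)) M * oprod (\<lambda>k. x (a!k)) X
         * (etaup (a!k) c * oprod (\<lambda>k. D (a!k)) (U (length a) M - X - {k})))"
proof -
  have f: "finite (U (length a) M - X)" using U_fin by blast
  have l: "\<forall>k\<in>U (length a) M - X. k < length a" unfolding U_def by auto
  show ?thesis unfolding trm_def
    by (simp only: mult.assoc OD_x[OF f l assms] distrib_left sum_distrib_left)
qed

end



context W begin

definition cp :: "nat list \<Rightarrow> nat set set \<Rightarrow> 'a" where
  "cp a M = cprod (\<lambda>p. etaup (a!Min p) (a!Max p)) M"
definition ox :: "nat list \<Rightarrow> nat set \<Rightarrow> 'a" where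
  "ox a X = oprod (\<lambda>k. x (a!k)) X"
definition od :: "nat list \<Rightarrow> nat set \<Rightarrow> 'a" where
  "od a X = oprod (\<lambda>k. D (a!k)) X"

lemma trm_alt: "trm a M X = cp a M * ox a X * od a (U (length a) M - X)"
  unfolding trm_def cp_def ox_def od_def ..

lemma Sii_alt: "Sii a e = (\<Sum>z\<in>Bs (length a) e. trm a (fst z) (snd z))"
  unfolding Sii_def by (simp add: case_prod_beta')

lemma cp_snoc: "pmatching (length a) M \<Longrightarrow> cp (a@[c]) M = cp a M"
  unfolding cp_def
proof (rule cprod_cong)
  fix p assume "pmatching (length a) M" "p \<in> M"
  then have "Min p < length a" "Max p < length a" using pm_MinMax by blast+
  then show "etaup ((a@[c])!Min p) ((a@[c])!Max p) = etaup (a!Min p) (a!Max p)" by (simp add: nth_append)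
qed (rule pm_fin)

lemma ox_snoc: "X \<subseteq> {0..<length a} \<Longrightarrow> ox (a@[c]) X = ox a X"
  unfolding ox_def by (rule oprod_cong) (auto simp: nth_append intro: finite_subset)

lemma od_snoc: "X \<subseteq> {0..<length a} \<Longrightarrow> od (a@[c]) X = od a X"
  unfolding od_def by (rule oprod_cong) (auto simp: nth_append intro: finite_subset)

lemma ox_ins: "X \<subseteq> {0..<length a} \<Longrightarrow> ox (a@[c]) (insert (length a) X) = ox a X * x c"
proof -
  assume X: "X \<subseteq> {0..<length a}"
  have f: "finite X" using X finite_subset by blast
  have "ox (a@[c]) (insert (length a) X) = ox (a@[c]) X * x ((a@[c])!length a)"
    unfolding ox_def by (rule oprod_insert_max) (use f X in auto)
  then show ?thesis using ox_snoc[OF X] by simp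
qed

lemma od_ins: "X \<subseteq> {0..<length a} \<Longrightarrow> od (a@[c]) (insert (length a) X) = od a X * D c"
proof -
  assume X: "X \<subseteq> {0..<length a}"
  have f: "finite X" using X finite_subset by blast
  have "od (a@[c]) (insert (length a) X) = od (a@[c]) X * D ((a@[c])!length a)"
    unfolding od_def by (rule oprod_insert_max) (use f X in auto)
  then show ?thesis using od_snoc[OF X] by simp
qed

end



lemma U_sub: "U l M \<subseteq> {0..<l}" unfolding U_def by auto

lemma card_diff1: "finite X \<Longrightarrow> l \<in> X \<Longrightarrow> int (card (X - {l})) = int (card X) - 1"
proof -
  assume "finite X" "l \<in> X"
  moreover then have "card X \<ge> 1" by (metis One_nat_def Suc_leI card_gt_0_iff empty_iff)
  ultimately show ?thesis by simp
qed


lemma Bs_D: "(M,X) \<in> Bs l e \<Longrightarrow> pmatching l M \<and> X \<subseteq> U l M \<and> int (card X) - int (card (U l M - X)) = e"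
  unfolding Bs_def by simp

lemma Bs_I: "pmatching l M \<Longrightarrow> X \<subseteq> U l M \<Longrightarrow> int (card X) - int (card (U l M - X)) = e \<Longrightarrow> (M,X) \<in> Bs l e"
  unfolding Bs_def by simp

lemma BsA1:
  assumes "(M,X) \<in> Bs (Suc l) e" "l \<in> X"
  shows "(M, X - {l}) \<in> Bs l (e-1) \<and> l \<notin> \<Union>M"
proof -
  note B = Bs_D[OF assms(1)]
  have nl: "l \<notin> \<Union>M" using B assms(2) unfolding U_def by blast
  have pm: "pmatching l M" using pm_down B nl by blast
  have US: "U (Suc l) M = insert l (U l M)" using U_Suc[OF nl] .
  have s: "X - {l} \<subseteq> U l M" using B unfolding US by blast
  have eq: "U (Suc l) M - X = U l M - (X - {l})" unfolding US using assms(2) l_notin_U[of l M] by blast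
  have fX: "finite X" using finite_subset[OF conjunct1[OF conjunct2[OF B]] U_fin] .
  have "int (card (X - {l})) = int (card X) - 1" using card_diff1[OF fX assms(2)] .
  then have "int (card (X - {l})) - int (card (U l M - (X - {l}))) = e - 1" using B eq by simp
  then show ?thesis using Bs_I[OF pm s] nl by simp
qed

lemma BsA2:
  assumes "(M,X) \<in> Bs l (e-1)"
  shows "(M, insert l X) \<in> Bs (Suc l) e"
proof -
  note B = Bs_D[OF assms(1)]
  have nl: "l \<notin> \<Union>M" using B pm_notl by blast
  have pm: "pmatching (Suc l) M" using pm_Suc B by blast
  have US: "U (Suc l) M = insert l (U l M)" using U_Suc[OF nl] .
  have s: "insert l X \<subseteq> U (Suc l) M" using B unfolding US by blast
  have lX: "l \<notin> X" using B l_notin_U[of l M] by blast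
  have eq: "U (Suc l) M - insert l X = U l M - X" unfolding US using l_notin_U[of l M] by blast
  have fX: "finite X" using finite_subset[OF conjunct1[OF conjunct2[OF B]] U_fin] .
  have "card (insert l X) = Suc (card X)" using fX lX by simp
  then have "int (card (insert l X)) - int (card (U (Suc l) M - insert l X)) = e" using B eq by simp
  then show ?thesis using Bs_I[OF pm s] by simp
qed

lemma BsB1:
  assumes "(M,X) \<in> Bs (Suc l) e" "l \<notin> X" "l \<notin> \<Union>M"
  shows "(M, X) \<in> Bs l (e+1)"
proof -
  note B = Bs_D[OF assms(1)]
  have pm: "pmatching l M" using pm_down B assms(3) by blast
  have US: "U (Suc l) M = insert l (U l M)" using U_Suc[OF assms(3)] .
  have s: "X \<subseteq> U l M" using B assms(2) unfolding US by blast
  have eq: "U (Suc l) M - X = insert l (U l M - X)" using assms(2) unfolding US by blast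
  have "card (insert l (U l M - X)) = Suc (card (U l M - X))" using U_fin[of l M] l_notin_U[of l M] by simp
  then have "int (card X) - int (card (U l M - X)) = e + 1" using B eq by simp
  then show ?thesis using Bs_I[OF pm s] by simp
qed

lemma BsB2:
  assumes "(M,X) \<in> Bs l (e+1)"
  shows "(M, X) \<in> Bs (Suc l) e \<and> l \<notin> X \<and> l \<notin> \<Union>M"
proof -
  note B = Bs_D[OF assms(1)]
  have nl: "l \<notin> \<Union>M" using B pm_notl by blast
  have pm: "pmatching (Suc l) M" using pm_Suc B by blast
  have US: "U (Suc l) M = insert l (U l M)" using U_Suc[OF nl] .
  have lX: "l \<notin> X" using B l_notin_U[of l M] by blast
  have s: "X \<subseteq> U (Suc l) M" using B unfolding US by blast
  have eq: "U (Suc l) M - X = insert l (U l M - X)" using lX unfolding US by blast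
  have "card (insert l (U l M - X)) = Suc (card (U l M - X))" using U_fin[of l M] l_notin_U[of l M] by simp
  then have "int (card X) - int (card (U (Suc l) M - X)) = e" using B eq by simp
  then show ?thesis using Bs_I[OF pm s] nl lX by simp
qed

lemma BsC2:
  assumes "(M,X) \<in> Bs l (e-1)" "k \<in> U l M - X"
  shows "(insert {k,l} M, X) \<in> Bs (Suc l) e"
proof -
  note B = Bs_D[OF assms(1)]
  have kl: "k < l" using assms(2) U_sub by fastforce
  have kM: "k \<notin> \<Union>M" using assms(2) unfolding U_def by blast
  have nl: "l \<notin> \<Union>M" using B pm_notl by blast
  have pm: "pmatching (Suc l) (insert {k,l} M)"
    unfolding pmatching_def
  proof (intro conjI ballI impI)
    fix p assume "p \<in> insert {k,l} M"
    then show "p \<subseteq> {0..<Suc l}" using kl pm_sub[OF conjunct1[OF B]] by fastforce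
    show "card p = 2" using \<open>p \<in> insert {k,l} M\<close> kl pm_card[OF conjunct1[OF B]] by auto
  next
    fix p q assume pq: "p \<in> insert {k,l} M" "q \<in> insert {k,l} M" "p \<noteq> q"
    show "p \<inter> q = {}"
    proof (cases "p = {k,l}")
      case True
      then have "q \<in> M" using pq by auto
      then show ?thesis using True kM nl by blast
    next
      case False
      then have pM: "p \<in> M" using pq by auto
      show ?thesis
      proof (cases "q = {k,l}")
        case True then show ?thesis using pM kM nl by blast
      next
        case False
        then have "q \<in> M" using pq by auto
        then show ?thesis using pm_disj[OF conjunct1[OF B] pM] pq by blast
      qed
    qed
  qed
  have US: "U (Suc l) (insert {k,l} M) = U l M - {k}" unfolding U_def using kl by auto
  have s: "X \<subseteq> U (Suc l) (insert {k,l} M)" using B assms(2) unfolding US by blast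
  have eq: "U (Suc l) (insert {k,l} M) - X = (U l M - X) - {k}" unfolding US by blast
  have "int (card ((U l M - X) - {k})) = int (card (U l M - X)) - 1"
    using card_diff1[OF _ assms(2)] U_fin by simp
  then have "int (card X) - int (card (U (Suc l) (insert {k,l} M) - X)) = e" using B eq by simp
  then show ?thesis using Bs_I[OF pm s] by simp
qed

lemma BsC1:
  assumes "(M',X) \<in> Bs (Suc l) e" "l \<in> \<Union>M'"
  shows "\<exists>M k. M' = insert {k,l} M \<and> {k,l} \<notin> M \<and> (M,X) \<in> Bs l (e-1) \<and> k \<in> U l M - X"
proof -
  note B = Bs_D[OF assms(1)]
  obtain p where p: "p \<in> M'" "l \<in> p" using assms(2) by blast
  have c2: "card p = 2" using pm_card B p by blast
  have ps: "p \<subseteq> {0..<Suc l}" using pm_sub B p by blast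
  obtain u v where uv: "p = {u,v}" "u \<noteq> v" using card_2_iff[THEN iffD1, OF c2] by blast
  obtain k where k: "p = {k,l}" "k \<noteq> l" using uv p(2) by (metis insert_commute insertE singletonD)
  have kl: "k < l" using k ps by auto
  define M where "M = M' - {p}"
  have M': "M' = insert {k,l} M" using p k M_def by blast
  have pn: "{k,l} \<notin> M" using M_def k by blast
  have disj: "\<And>q. q \<in> M \<Longrightarrow> q \<inter> {k,l} = {}"
    using pm_disj[OF conjunct1[OF B]] p k M_def by blast
  have nl: "l \<notin> \<Union>M" using disj by blast
  have kM: "k \<notin> \<Union>M" using disj by blast
  have pm: "pmatching l M"
  proof -
    have "pmatching (Suc l) M" using conjunct1[OF B] unfolding pmatching_def M_def by blast
    then show ?thesis using pm_down nl by blast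
  qed
  have US: "U (Suc l) M' = U l M - {k}" unfolding U_def M' using kl by auto
  have s: "X \<subseteq> U l M" using B unfolding US by blast
  have kX: "k \<notin> X" using B unfolding US by blast
  have kU: "k \<in> U l M - X" using kX kM kl unfolding U_def by auto
  have eq: "U (Suc l) M' - X = (U l M - X) - {k}" unfolding US by blast
  have "int (card ((U l M - X) - {k})) = int (card (U l M - X)) - 1"
    using card_diff1[OF _ kU] U_fin by simp
  then have "int (card X) - int (card (U l M - X)) = e - 1" using B eq by simp
  then have "(M,X) \<in> Bs l (e-1)" using Bs_I[OF pm s] by simp
  then show ?thesis using M' pn kU by blast
qed

lemma BsC_inj:
  assumes "(M,X) \<in> Bs l e1" "(M',X') \<in> Bs l e2" "k \<in> U l M" "k' \<in> U l M'"
    "insert {k,l} M = insert {k',l} M'"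
  shows "M = M' \<and> k = k'"
proof -
  have n1: "l \<notin> \<Union>M" using Bs_D[OF assms(1)] pm_notl by blast
  have n2: "l \<notin> \<Union>M'" using Bs_D[OF assms(2)] pm_notl by blast
  have kl: "k < l" "k' < l" using assms(3,4) U_sub by fastforce+
  have "{k,l} \<in> insert {k',l} M'" using assms(5) by blast
  moreover have "{k,l} \<notin> M'" using n2 by blast
  ultimately have "{k,l} = {k',l}" by blast
  then have kk: "k = k'" using kl by (metis doubleton_eq_iff less_irrefl)
  have "{k,l} \<notin> M" using n1 by blast
  then have "M = insert {k,l} M - {{k,l}}" by blast
  also have "\<dots> = insert {k',l} M' - {{k',l}}" using assms(5) kk by simp
  also have "\<dots> = M'" using n2 by blast
  finally show ?thesis using kk by simp
qed




context W begin

lemma cp_comm: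
  assumes "set a \<subseteq> {1..n}" "pmatching (length a) M"
  shows "\<forall>u\<in>M. \<forall>v\<in>M. etaup (a!Min u) (a!Max u) * etaup (a!Min v) (a!Max v)
     = etaup (a!Min v) (a!Max v) * etaup (a!Min u) (a!Max u)"
proof (intro ballI)
  fix u v assume "u \<in> M" "v \<in> M"
  then have "Min u < length a" "Max u < length a" "Min v < length a" "Max v < length a"
    using pm_MinMax[OF assms(2)] by blast+
  then show "etaup (a!Min u) (a!Max u) * etaup (a!Min v) (a!Max v)
     = etaup (a!Min v) (a!Max v) * etaup (a!Min u) (a!Max u)"
    using ee nth_in[OF assms(1)] by blast
qed

lemma e_cp:
  assumes "set a \<subseteq> {1..n}" "pmatching (length a) M" "i \<in> {1..n}" "j \<in> {1..n}"
  shows "etaup i j * cp a M = cp a M * etaup i j"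
  unfolding cp_def
proof (rule cprod_commute)
  show "finite M" using pm_fin assms(2) by blast
  show "\<forall>u\<in>M. etaup i j * etaup (a ! Min u) (a ! Max u) = etaup (a ! Min u) (a ! Max u) * etaup i j"
  proof
    fix u assume "u \<in> M"
    then have "Min u < length a" "Max u < length a" using pm_MinMax[OF assms(2)] by blast+
    then show "etaup i j * etaup (a ! Min u) (a ! Max u) = etaup (a ! Min u) (a ! Max u) * etaup i j"
      using ee[OF assms(3,4)] nth_in[OF assms(1)] by blast
  qed
qed

lemma e_ox:
  assumes "set a \<subseteq> {1..n}" "X \<subseteq> {0..<length a}" "i \<in> {1..n}" "j \<in> {1..n}"
  shows "etaup i j * ox a X = ox a X * etaup i j"
  unfolding ox_def
proof (rule oprod_commute)
  show "finite X" using assms(2) finite_subset by blast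
  show "\<forall>u\<in>X. etaup i j * x (a!u) = x (a!u) * etaup i j"
  proof
    fix u assume "u \<in> X"
    then have "u < length a" using assms(2) by auto
    then show "etaup i j * x (a!u) = x (a!u) * etaup i j"
      using ex[OF assms(3,4)] nth_in[OF assms(1)] by blast
  qed
qed

end



context W begin

lemma Sii_snoc:
  assumes va: "set a \<subseteq> {1..n}" and vc: "c \<in> {1..n}"
  shows "Sii (a@[c]) e = Sii a (e-1) * x c + Sii a (e+1) * D c"
proof -
  define l where "l = length a"
  have va': "set (a@[c]) \<subseteq> {1..n}" using va vc by simp
  have la': "length (a@[c]) = Suc l" unfolding l_def by simp
  define B' where "B' = Bs (Suc l) e"
  define PA where "PA = {z\<in>B'. l \<in> snd z}"
  define PB where "PB = {z\<in>B'. l \<notin> snd z \<and> l \<notin> \<Union>(fst z)}"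
  define PC where "PC = {z\<in>B'. l \<in> \<Union>(fst z)}"
  define g where "g = (\<lambda>z. trm (a@[c]) (fst z) (snd z))"
  define T1 where "T1 = (\<lambda>z. cp a (fst z) * ox a (snd z) * x c * od a (U l (fst z) - snd z))"
  define T2 where "T2 = (\<lambda>z. trm a (fst z) (snd z) * D c)"
  define T3 where "T3 = (\<lambda>z k. cp a (fst z) * ox a (snd z) * (etaup (a!k) c * od a (U l (fst z) - snd z - {k})))"
  define Sg where "Sg = (SIGMA z:Bs l (e-1). U l (fst z) - snd z)"
  have finB': "finite B'" unfolding B'_def by (rule Bs_fin)
  have L0: "Sii (a@[c]) e = sum g B'" unfolding Sii_alt g_def B'_def la' ..
  have splitB: "B' = PA \<union> PB \<union> PC" unfolding PA_def PB_def PC_def by blast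
  have dAB: "PA \<inter> PB = {}" unfolding PA_def PB_def by blast
  have dABC: "(PA \<union> PB) \<inter> PC = {}"
  proof -
    have "\<And>z. z \<in> B' \<Longrightarrow> l \<in> snd z \<Longrightarrow> l \<notin> \<Union>(fst z)"
    proof -
      fix z assume "z \<in> B'" "l \<in> snd z"
      then have "snd z \<subseteq> U (Suc l) (fst z)" unfolding B'_def using Bs_D[of "fst z" "snd z"] by simp
      then show "l \<notin> \<Union>(fst z)" using \<open>l \<in> snd z\<close> unfolding U_def by blast
    qed
    then show ?thesis unfolding PA_def PB_def PC_def by blast
  qed
  have L1: "sum g B' = sum g PA + sum g PB + sum g PC"
  proof -
    have f: "finite PA" "finite PB" "finite PC"
      unfolding PA_def PB_def PC_def using finB' by simp_all
    have "sum g B' = sum g (PA \<union> PB) + sum g PC"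
      unfolding splitB by (rule sum.union_disjoint) (use f dABC in simp_all)
    also have "sum g (PA \<union> PB) = sum g PA + sum g PB"
      by (rule sum.union_disjoint) (use f dAB in simp_all)
    finally show ?thesis .
  qed
  have hA: "sum g PA = sum T1 (Bs l (e-1))"
  proof (rule sum.reindex_bij_witness[where j = "\<lambda>z. (fst z, snd z - {l})" and i = "\<lambda>z. (fst z, insert l (snd z))"])
    fix z assume "z \<in> PA"
    then obtain M X where z: "z = (M,X)" "(M,X) \<in> Bs (Suc l) e" "l \<in> X" unfolding PA_def B'_def
      by (metis (mono_tags, lifting) mem_Collect_eq prod.collapse)
    show "(fst (fst z, snd z - {l}), insert l (snd (fst z, snd z - {l}))) = z" using z by auto
    have A1: "(M, X - {l}) \<in> Bs l (e-1)" "l \<notin> \<Union>M" using BsA1[OF z(2,3)] by auto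
    then show "(fst z, snd z - {l}) \<in> Bs l (e-1)" using z by simp
    note BD = Bs_D[OF A1(1)]
    have pm: "pmatching (length a) M" using BD l_def by simp
    have Xs: "X - {l} \<subseteq> {0..<length a}" using BD U_sub l_def by blast
    have US: "U (Suc l) M - X = U l M - (X - {l})" unfolding U_Suc[OF A1(2)] using z(3) l_notin_U[of l M] by blast
    have Us: "U l M - (X - {l}) \<subseteq> {0..<length a}" using U_sub l_def by blast
    have Xe: "X = insert (length a) (X - {l})" using z(3) l_def by blast
    have "g z = cp (a@[c]) M * ox (a@[c]) X * od (a@[c]) (U (Suc l) M - X)"
      unfolding g_def z(1) trm_alt la' by simp
    also have "\<dots> = cp a M * (ox a (X - {l}) * x c) * od a (U l M - (X - {l}))"
      unfolding US cp_snoc[OF pm] od_snoc[OF Us] by (subst Xe, subst ox_ins[OF Xs], rule refl)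
    finally show "T1 (fst z, snd z - {l}) = g z" unfolding T1_def using z(1) by (simp add: mult.assoc)
  next
    fix z assume "z \<in> Bs l (e-1)"
    then obtain M X where z: "z = (M,X)" "(M,X) \<in> Bs l (e-1)" by (metis prod.collapse)
    have "l \<notin> X" using Bs_D[OF z(2)] l_notin_U[of l M] by blast
    then show "(fst (fst z, insert l (snd z)), snd (fst z, insert l (snd z)) - {l}) = z" using z by simp
    show "(fst z, insert l (snd z)) \<in> PA" unfolding PA_def B'_def using BsA2[OF z(2)] z(1) by simp
  qed
  have hB: "sum g PB = sum T2 (Bs l (e+1))"
  proof (rule sum.reindex_bij_witness[where j = "\<lambda>z. z" and i = "\<lambda>z. z"])
    fix z assume "z \<in> PB"
    then obtain M X where z: "z = (M,X)" "(M,X) \<in> Bs (Suc l) e" "l \<notin> X" "l \<notin> \<Union>M" unfolding PB_def B'_def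
      by (metis (mono_tags, lifting) mem_Collect_eq prod.collapse)
    show "z = z" ..
    have B1: "(M, X) \<in> Bs l (e+1)" using BsB1[OF z(2,3,4)] .
    then show "z \<in> Bs l (e+1)" using z by simp
    note BD = Bs_D[OF B1]
    have pm: "pmatching (length a) M" using BD l_def by simp
    have Xs: "X \<subseteq> {0..<length a}" using BD U_sub l_def by blast
    have US: "U (Suc l) M - X = insert (length a) (U l M - X)" unfolding U_Suc[OF z(4)] using z(3) l_def by blast
    have Us: "U l M - X \<subseteq> {0..<length a}" using U_sub l_def by blast
    have "g z = cp (a@[c]) M * ox (a@[c]) X * od (a@[c]) (U (Suc l) M - X)"
      unfolding g_def z(1) trm_alt la' by simp
    also have "\<dots> = cp a M * ox a X * (od a (U l M - X) * D c)"
      unfolding US cp_snoc[OF pm] od_ins[OF Us] ox_snoc[OF Xs] ..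
    finally show "T2 z = g z" unfolding T2_def trm_alt using z(1) l_def by (simp add: mult.assoc)
  next
    fix z assume "z \<in> Bs l (e+1)"
    then obtain M X where z: "z = (M,X)" "(M,X) \<in> Bs l (e+1)" by (metis prod.collapse)
    show "z = z" ..
    show "z \<in> PB" unfolding PB_def B'_def using BsB2[OF z(2)] z(1) by simp
  qed
  have hC: "sum g PC = sum (case_prod T3) Sg"
  proof (rule sum.reindex_cong[where l = "\<lambda>(z,k). (insert {k,l} (fst z), snd z)"])
    show "inj_on (\<lambda>(z,k). (insert {k,l} (fst z), snd z)) Sg"
    proof (rule inj_onI)
      fix y1 y2 assume y: "y1 \<in> Sg" "y2 \<in> Sg"
        "(\<lambda>(z,k). (insert {k,l} (fst z), snd z)) y1 = (\<lambda>(z,k). (insert {k,l} (fst z), snd z)) y2"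
      obtain M X k where y1: "y1 = ((M,X),k)" by (metis prod.collapse)
      obtain M' X' k' where y2: "y2 = ((M',X'),k')" by (metis prod.collapse)
      have m1: "(M,X) \<in> Bs l (e-1)" "k \<in> U l M" using y(1) y1 unfolding Sg_def by auto
      have m2: "(M',X') \<in> Bs l (e-1)" "k' \<in> U l M'" using y(2) y2 unfolding Sg_def by auto
      have eqs: "insert {k,l} M = insert {k',l} M'" "X = X'" using y(3) y1 y2 by auto
      show "y1 = y2" using BsC_inj[OF m1(1) m2(1) m1(2) m2(2) eqs(1)] eqs(2) y1 y2 by simp
    qed
    show "PC = (\<lambda>(z,k). (insert {k,l} (fst z), snd z)) ` Sg"
    proof
      show "PC \<subseteq> (\<lambda>(z,k). (insert {k,l} (fst z), snd z)) ` Sg"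
      proof
        fix z assume "z \<in> PC"
        then obtain M' X where z: "z = (M',X)" "(M',X) \<in> Bs (Suc l) e" "l \<in> \<Union>M'" unfolding PC_def B'_def
          by (metis (mono_tags, lifting) mem_Collect_eq prod.collapse)
        obtain M k where Mk: "M' = insert {k,l} M" "(M,X) \<in> Bs l (e-1)" "k \<in> U l M - X"
          using BsC1[OF z(2,3)] by blast
        have "((M,X),k) \<in> Sg" unfolding Sg_def using Mk by simp
        moreover have "z = (\<lambda>(z,k). (insert {k,l} (fst z), snd z)) ((M,X),k)" using z Mk by simp
        ultimately show "z \<in> (\<lambda>(z,k). (insert {k,l} (fst z), snd z)) ` Sg" by blast
      qed
      show "(\<lambda>(z,k). (insert {k,l} (fst z), snd z)) ` Sg \<subseteq> PC"
      proof
        fix w assume "w \<in> (\<lambda>(z,k). (insert {k,l} (fst z), snd z)) ` Sg"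
        then obtain M X k where w: "w = (insert {k,l} M, X)" "(M,X) \<in> Bs l (e-1)" "k \<in> U l M - X"
          unfolding Sg_def by auto
        show "w \<in> PC" unfolding PC_def B'_def using BsC2[OF w(2,3)] w(1) by simp
      qed
    qed
  next
    fix y assume "y \<in> Sg"
    then obtain M X k where y: "y = ((M,X),k)" "(M,X) \<in> Bs l (e-1)" "k \<in> U l M - X"
      unfolding Sg_def by auto
    note BD = Bs_D[OF y(2)]
    have pm: "pmatching (length a) M" using BD l_def by simp
    have kl: "k < l" using y(3) U_sub by fastforce
    have nl: "l \<notin> \<Union>M" using BD pm_notl by blast
    have pn: "{k,l} \<notin> M" using nl by blast
    have finM: "finite M" using pm_fin pm by blast
    have pmB: "pmatching (length (a@[c])) (insert {k,l} M)"
      using Bs_D[OF BsC2[OF y(2,3)]] la' by simp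
    have Xs: "X \<subseteq> {0..<length a}" using BD U_sub l_def by blast
    have US: "U (Suc l) (insert {k,l} M) - X = U l M - X - {k}" unfolding U_def using kl by auto
    have Us: "U l M - X - {k} \<subseteq> {0..<length a}" using U_sub l_def by blast
    have mm: "Min {k,l} = k" "Max {k,l} = l" using kl by auto
    have ak: "a!k \<in> {1..n}" using nth_in[OF va] kl l_def by simp
    have "cp (a@[c]) (insert {k,l} M) = etaup ((a@[c])!Min {k,l}) ((a@[c])!Max {k,l}) * cp (a@[c]) M"
      unfolding cp_def
      by (rule cprod_insert[OF finM pn]) (rule cp_comm[OF va' pmB])
    also have "\<dots> = etaup (a!k) c * cp a M"
      unfolding mm cp_snoc[OF pm] using kl l_def by (simp add: nth_append)
    finally have cpe: "cp (a@[c]) (insert {k,l} M) = etaup (a!k) c * cp a M" .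
    have "g ((\<lambda>(z,k). (insert {k,l} (fst z), snd z)) y)
       = cp (a@[c]) (insert {k,l} M) * ox (a@[c]) X * od (a@[c]) (U (Suc l) (insert {k,l} M) - X)"
      unfolding g_def y(1) trm_alt la' by simp
    also have "\<dots> = etaup (a!k) c * cp a M * ox a X * od a (U l M - X - {k})"
      unfolding cpe US ox_snoc[OF Xs] od_snoc[OF Us] ..
    also have "\<dots> = cp a M * (etaup (a!k) c * ox a X) * od a (U l M - X - {k})"
      unfolding e_cp[OF va pm ak vc] by (simp add: mult.assoc)
    also have "\<dots> = cp a M * ox a X * (etaup (a!k) c * od a (U l M - X - {k}))"
      unfolding e_ox[OF va Xs ak vc] by (simp add: mult.assoc)
    finally show "g ((\<lambda>(z,k). (insert {k,l} (fst z), snd z)) y) = case_prod T3 y"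
      unfolding T3_def y(1) by simp
  qed
  have R1: "Sii a (e-1) * x c = sum T1 (Bs l (e-1)) + sum (case_prod T3) Sg"
  proof -
    have "Sii a (e-1) * x c = (\<Sum>z\<in>Bs l (e-1). trm a (fst z) (snd z) * x c)"
      unfolding Sii_alt l_def by (simp add: sum_distrib_right)
    also have "\<dots> = (\<Sum>z\<in>Bs l (e-1). T1 z + (\<Sum>k\<in>U l (fst z) - snd z. T3 z k))"
      by (rule sum.cong[OF refl]) (simp add: trm_x[OF va vc] T1_def T3_def cp_def ox_def od_def l_def)
    also have "\<dots> = sum T1 (Bs l (e-1)) + (\<Sum>z\<in>Bs l (e-1). (\<Sum>k\<in>U l (fst z) - snd z. T3 z k))"
      by (simp add: sum.distrib)
    also have "(\<Sum>z\<in>Bs l (e-1). (\<Sum>k\<in>U l (fst z) - snd z. T3 z k)) = sum (case_prod T3) Sg"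
      unfolding Sg_def by (rule sum.Sigma) (simp_all add: Bs_fin U_fin)
    finally show ?thesis .
  qed
  have R2: "Sii a (e+1) * D c = sum T2 (Bs l (e+1))"
    unfolding Sii_alt l_def T2_def by (simp add: sum_distrib_right)
  show ?thesis unfolding L0 L1 hA hB hC R1 R2 by (simp add: algebra_simps)
qed


lemma Si_Sii: "set a \<subseteq> {1..n} \<Longrightarrow> Si a e = Sii a e"
proof (induction a arbitrary: e rule: rev_induct)
  case Nil then show ?case by (simp add: Si_Nil Sii_Nil)
next
  case (snoc c a)
  have va: "set a \<subseteq> {1..n}" and vc: "c \<in> {1..n}" using snoc.prems by auto
  show ?case using snoc.IH[OF va] by (simp add: Si_snoc Sii_snoc[OF va vc])
qed

end

theorem mainTheorem5:
  fixes n d :: nat and a :: "nat list"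
    and x dl :: "nat \<Rightarrow> 'a::ring_1" and etalo etaup :: "nat \<Rightarrow> nat \<Rightarrow> 'a"
  assumes "weyl_rels n x dl etalo etaup"
    and "set a \<subseteq> {1..n}"
  shows "sum_i n x dl etaup a d = sum_ii n x dl etaup a d"
proof -
  interpret W n x dl etalo etaup by standard (rule assms(1))
  show ?thesis using Si_Sii[OF assms(2)] sum_i_Si sum_ii_Sii by simp
qed


end
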